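(* Let $G$ be a connected cubic graph on $n$ vertices. Then $M(G)\leq Z(G)\leq n/2+1$.
   Context: A cubic graph is a $3$-regular simple graph. For a graph $G$ on vertices $w_1,\dots,w_n$, $S(G)$ is the set of real symmetric $n\times n$ matrices $A$ such that for $s\neq t$, $a_{st}\neq 0$ if and only if $w_s$ and $w_t$ are adjacent (diagonal entries arbitrary); the maximum nullity $M(G)$ is the maximum nullity of a matrix in $S(G)$. Zero forcing: color each vertex black or white; if a black vertex has exactly one white neighbor, that neighbor is recolored black. A set $Z$ is a zero forcing set if starting with exactly $Z$ black and applying this rule repeatedly makes all vertices black; $Z(G)$ is the minimum size of a zero forcing set. *)

theory Defs
  imports "HOL-Analysis.Analysis"
begin

definition cubic_graph :: "('n::finite \<Rightarrow> 'n \<Rightarrow> bool) \<Rightarrow> bool" where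
  "cubic_graph E \<longleftrightarrow> (\<forall>u v. E u v \<longrightarrow> E v u) \<and> (\<forall>v. \<not> E v v)
     \<and> (\<forall>v. card {u. E v u} = 3)"

definition connected_graph :: "('n::finite \<Rightarrow> 'n \<Rightarrow> bool) \<Rightarrow> bool" where
  "connected_graph E \<longleftrightarrow> (\<forall>u v. (u, v) \<in> {(x, y). E x y}\<^sup>*)"

definition SG :: "('n::finite \<Rightarrow> 'n \<Rightarrow> bool) \<Rightarrow> (real^'n^'n) set" where
  "SG E = {A. transpose A = A \<and> (\<forall>s t. s \<noteq> t \<longrightarrow> (A $ s $ t \<noteq> 0 \<longleftrightarrow> E s t))}"

definition nullity :: "real^'n::finite^'m::finite \<Rightarrow> nat" where
  "nullity A = dim {x. A *v x = 0}"

definition max_nullity :: "('n::finite \<Rightarrow> 'n \<Rightarrow> bool) \<Rightarrow> nat" where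
  "max_nullity E = Max (nullity ` SG E)"

inductive forced :: "('n \<Rightarrow> 'n \<Rightarrow> bool) \<Rightarrow> 'n set \<Rightarrow> 'n \<Rightarrow> bool"
  for E :: "'n \<Rightarrow> 'n \<Rightarrow> bool" and Z :: "'n set" where
  init: "v \<in> Z \<Longrightarrow> forced E Z v"
| force: "forced E Z u \<Longrightarrow> E u v \<Longrightarrow> (\<forall>w. E u w \<and> w \<noteq> v \<longrightarrow> forced E Z w)
           \<Longrightarrow> forced E Z v"

definition zero_forcing_set :: "('n \<Rightarrow> 'n \<Rightarrow> bool) \<Rightarrow> 'n set \<Rightarrow> bool" where
  "zero_forcing_set E Z \<longleftrightarrow> (\<forall>v. forced E Z v)"

definition zero_forcing_number :: "('n::finite \<Rightarrow> 'n \<Rightarrow> bool) \<Rightarrow> nat" where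
  "zero_forcing_number E = Min (card ` {Z. zero_forcing_set E Z})"

end

theory Submission imports Defs begin

lemma forced_mono: "forced E Z v \<Longrightarrow> Z \<subseteq> Z' \<Longrightarrow> forced E Z' v"
  by (induction rule: forced.induct) (auto intro: forced.intros)

lemma nullity_le:
  fixes E :: "'n::finite \<Rightarrow> 'n \<Rightarrow> bool"
  assumes irr: "\<forall>v. \<not> E v v" and A: "A \<in> SG E" and Z: "zero_forcing_set E Z"
  shows "nullity A \<le> card Z"
proof -
  define N where "N = {x. A *v x = 0}"
  define f where "f = (\<lambda>x::real^'n. \<chi> i. if i \<in> Z then x$i else 0)"
  have lin: "linear f" unfolding f_def by (auto simp: linear_iff vec_eq_iff algebra_simps)
  have pat: "\<And>s t. s \<noteq> t \<Longrightarrow> (A $ s $ t \<noteq> 0 \<longleftrightarrow> E s t)" using A by (auto simp: SG_def)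
  have zero: "x = 0" if "x \<in> N" "f x = 0" for x
  proof -
    have xz: "x $ i = 0" if "i \<in> Z" for i
    proof -
      have "(f x) $ i = 0" using \<open>f x = 0\<close> by simp
      then show ?thesis using that by (simp add: f_def)
    qed
    have Ax: "(\<Sum>w\<in>UNIV. A$u$w * x$w) = 0" for u
    proof -
      have "(A *v x) $ u = 0" using \<open>x \<in> N\<close> by (simp add: N_def)
      then show ?thesis by (simp add: matrix_vector_mult_def)
    qed
    have "forced E Z v \<Longrightarrow> x $ v = 0" for v
    proof (induction rule: forced.induct)
      case (init v) then show ?case using xz by auto
    next
      case (force u v)
      have uv: "u \<noteq> v" using force.hyps(2) irr by auto
      have "(\<Sum>w\<in>UNIV. A$u$w * x$w) = A$u$v * x$v"
      proof (rule sum.remove[where x=v, THEN trans])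
        show "finite (UNIV::'n set)" by simp
        show "v \<in> UNIV" by simp
        have "(\<Sum>w\<in>UNIV - {v}. A$u$w * x$w) = 0"
        proof (rule sum.neutral, intro ballI)
          fix w assume w: "w \<in> UNIV - {v}"
          show "A$u$w * x$w = 0"
          proof (cases "w = u")
            case True then show ?thesis using force.IH by simp
          next
            case False
            then show ?thesis using pat[of u w] force.IH(2) w by auto
          qed
        qed
        then show "A $ u $ v * x $ v + (\<Sum>w\<in>UNIV - {v}. A $ u $ w * x $ w) = A $ u $ v * x $ v"
          by simp
      qed
      then have "A$u$v * x$v = 0" using Ax by simp
      moreover have "A$u$v \<noteq> 0" using pat[OF uv] force.hyps(2) by simp
      ultimately show ?case by simp
    qed
    then show ?thesis using Z unfolding zero_forcing_set_def by (simp add: vec_eq_iff)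
  qed
  have sub: "subspace N" unfolding N_def subspace_def
    by (simp add: matrix_vector_right_distrib matrix_vector_mult_scaleR)
  have inj: "inj_on f (span N)"
    unfolding span_eq_iff[THEN iffD2, OF sub]
  proof (rule inj_onI)
    fix x y assume "x \<in> N" "y \<in> N" "f x = f y"
    then have "x - y \<in> N" "f (x - y) = 0"
      using sub subspace_diff linear_diff[OF lin] by auto
    then have "x - y = 0" by (rule zero)
    then show "x = y" by simp
  qed
  have "dim (f ` N) = dim N" using eucl.dim_image_eq[OF lin inj] .
  moreover have "dim (f ` N) \<le> card ((\<lambda>i. axis i (1::real)) ` Z)"
  proof (rule dim_le_card)
    show "finite ((\<lambda>i. axis i (1::real)) ` Z)" by simp
    show "f ` N \<subseteq> span ((\<lambda>i. axis i 1) ` Z)"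
    proof
      fix y assume "y \<in> f ` N"
      then obtain x where y: "y = f x" by auto
      have "f x = (\<Sum>i\<in>Z. scaleR (x$i) (axis i 1))"
        unfolding f_def by (auto simp: vec_eq_iff sum_component axis_def if_distrib cong: if_cong)
      also have "\<dots> \<in> span ((\<lambda>i. axis i 1) ` Z)"
        by (intro span_sum span_scale span_base) auto
      finally show "y \<in> span ((\<lambda>i. axis i 1) ` Z)" using y by simp
    qed
  qed
  moreover have "card ((\<lambda>i. axis i (1::real)) ` Z) \<le> card Z" by (rule card_image_le) simp
  ultimately show ?thesis unfolding nullity_def N_def by simp
qed

lemma inv_ext:
  assumes sym: "\<forall>u v. E u v \<longrightarrow> E v u" and inv: "\<forall>z\<in>Z. \<exists>w. E z w \<and> forced E Z w"
    and f: "forced E Z v"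
  shows "\<exists>w. E v w \<and> forced E Z w"
  using f
proof cases
  case init then show ?thesis using inv by blast
next
  case (force u) then show ?thesis using sym by blast
qed

lemma crossing: "(x,y) \<in> R\<^sup>* \<Longrightarrow> P x \<Longrightarrow> \<not> P y \<Longrightarrow> \<exists>u v. (u,v) \<in> R \<and> P u \<and> \<not> P v"
  by (induction rule: rtrancl_induct) auto

lemma grow:
  fixes E :: "'n::finite \<Rightarrow> 'n \<Rightarrow> bool"
  assumes cub: "cubic_graph E" and con: "connected_graph E"
  shows "Z \<noteq> {} \<Longrightarrow> (\<forall>z\<in>Z. \<exists>w. E z w \<and> forced E Z w)
    \<Longrightarrow> 2 * card Z \<le> card {v. forced E Z v} + 2
    \<Longrightarrow> \<exists>Z'. zero_forcing_set E Z' \<and> 2 * card Z' \<le> CARD('n) + 2"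
proof (induction "CARD('n) - card {v. forced E Z v}" arbitrary: Z rule: less_induct)
  case less
  have sym: "\<forall>u v. E u v \<longrightarrow> E v u" and deg: "\<And>v. card {u. E v u} = 3"
    using cub by (auto simp: cubic_graph_def)
  show ?case
  proof (cases "zero_forcing_set E Z")
    case True
    have "card {v. forced E Z v} \<le> CARD('n)" by (rule card_mono) auto
    then show ?thesis using True less.prems(3) by auto
  next
    case False
    let ?C = "{v. forced E Z v}"
    obtain z where z: "z \<in> Z" using less.prems(1) by auto
    obtain y where y: "\<not> forced E Z y" using False by (auto simp: zero_forcing_set_def)
    have "(z,y) \<in> {(x,y). E x y}\<^sup>*" using con by (auto simp: connected_graph_def)
    then have "\<exists>u v. (u, v) \<in> {(x, y). E x y} \<and> forced E Z u \<and> \<not> forced E Z v"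
      by (rule crossing) (use forced.init[OF z] y in auto)
    then obtain u v where uv: "E u v" "forced E Z u" "\<not> forced E Z v" by auto
    obtain b where b: "E u b" "b \<noteq> v" "\<not> forced E Z b"
    proof -
      have "\<exists>b. E u b \<and> b \<noteq> v \<and> \<not> forced E Z b"
      proof (rule ccontr)
        assume "\<not> ?thesis"
        then have "forced E Z v" using forced.force[OF uv(2) uv(1)] by blast
        then show False using uv(3) by simp
      qed
      then show ?thesis using that by blast
    qed
    obtain w where w: "E u w" "forced E Z w" using inv_ext[OF sym less.prems(2) uv(2)] by blast
    have nb: "{x. E u x} = {w, v, b}"
    proof -
      have "w \<noteq> v" "w \<noteq> b" using w uv b by auto
      then have "card {w, v, b} = 3" using b by (simp add: card_insert_if)
      moreover have "{w, v, b} \<subseteq> {x. E u x}" using w uv b by auto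
      ultimately show ?thesis using deg[of u] card_subset_eq[of "{x. E u x}" "{w,v,b}"] by simp
    qed
    define Z' where "Z' = insert v Z"
    have sub: "?C \<subseteq> {x. forced E Z' x}"
    proof
      fix x assume "x \<in> ?C"
      then have "forced E Z x" by simp
      then have "forced E Z' x" by (rule forced_mono) (auto simp: Z'_def)
      then show "x \<in> {x. forced E Z' x}" by simp
    qed
    have vZ': "forced E Z' v" by (rule forced.init) (simp add: Z'_def)
    have bZ': "forced E Z' b"
    proof (rule forced.force[of _ _ u])
      show "forced E Z' u" using sub uv(2) by blast
      show "E u b" by fact
      show "\<forall>x. E u x \<and> x \<noteq> b \<longrightarrow> forced E Z' x"
      proof (intro allI impI)
        fix x assume x: "E u x \<and> x \<noteq> b"
        then have "x \<in> {w, v, b}" using nb by blast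
        then have "x = w \<or> x = v" using x by blast
        then show "forced E Z' x" using sub w(2) vZ' by blast
      qed
    qed
    have cardC: "card (insert v (insert b ?C)) = card ?C + 2" using uv b by simp
    have "insert v (insert b ?C) \<subseteq> {x. forced E Z' x}" using sub vZ' bZ' by blast
    then have "card (insert v (insert b ?C)) \<le> card {x. forced E Z' x}"
      by (intro card_mono) simp_all
    then have cC': "card ?C + 2 \<le> card {x. forced E Z' x}" using cardC by linarith
    have vZ: "v \<notin> Z" using uv(3) forced.init[of v Z E] by blast
    have cZ': "card Z' = card Z + 1" using vZ by (simp add: Z'_def)
    have le: "card {x. forced E Z' x} \<le> CARD('n)" by (rule card_mono) auto
    have dec: "CARD('n) - card {x. forced E Z' x} < CARD('n) - card ?C"
      using cC' le by linarith
    have i1: "Z' \<noteq> {}" by (simp add: Z'_def)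
    have i2: "\<forall>z\<in>Z'. \<exists>w. E z w \<and> forced E Z' w"
    proof
      fix z assume "z \<in> Z'"
      then consider "z = v" | "z \<in> Z" by (auto simp: Z'_def)
      then show "\<exists>w. E z w \<and> forced E Z' w"
      proof cases
        case 1 then show ?thesis using sym uv(1) sub uv(2) by blast
      next
        case 2 then show ?thesis using less.prems(2) sub by blast
      qed
    qed
    have i3: "2 * card Z' \<le> card {x. forced E Z' x} + 2" using cZ' cC' less.prems(3) by linarith
    show ?thesis using less.hyps[OF dec i1 i2 i3] .
  qed
qed


theorem mainTheorem6:
  fixes E :: "'n::finite \<Rightarrow> 'n \<Rightarrow> bool"
  assumes "cubic_graph E" and "connected_graph E"
  shows "max_nullity E \<le> zero_forcing_number E
    \<and> real (zero_forcing_number E) \<le> real CARD('n) / 2 + 1"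
proof -
  have sym: "\<forall>u v. E u v \<longrightarrow> E v u" and irr: "\<forall>v. \<not> E v v"
    and deg: "\<And>v. card {u. E v u} = 3"
    using assms(1) by (auto simp: cubic_graph_def)
  let ?F = "card ` {Z. zero_forcing_set E Z}"
  have finF: "finite ?F" by simp
  have univ: "zero_forcing_set E UNIV" by (auto simp: zero_forcing_set_def intro: forced.init)
  have neF: "?F \<noteq> {}" using univ by blast
  obtain Zm where Zm: "zero_forcing_set E Zm" "card Zm = zero_forcing_number E"
    using Min_in[OF finF neF] unfolding zero_forcing_number_def by auto
  have part1: "max_nullity E \<le> zero_forcing_number E"
  proof -
    define Adj where "Adj = (\<chi> s t. if E s t then 1 else (0::real))"
    have "Adj \<in> SG E" using sym
      by (auto simp: SG_def Adj_def transpose_def vec_eq_iff)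
    then have neN: "nullity ` SG E \<noteq> {}" by blast
    have "nullity ` SG E \<subseteq> {..CARD('n)}"
      using nullity_le[OF irr _ univ] by auto
    then have finN: "finite (nullity ` SG E)" using finite_subset by blast
    show ?thesis unfolding max_nullity_def
      using nullity_le[OF irr _ Zm(1)] Zm(2) by (auto simp: Max_le_iff[OF finN neN])
  qed
  obtain v0 :: 'n where True by blast
  have "{u. E v0 u} \<noteq> {}" using deg[of v0] by (metis card.empty zero_neq_numeral)
  then obtain w0 where w0: "E v0 w0" by blast
  have vw: "v0 \<noteq> w0" using w0 irr by auto
  let ?Z0 = "{v0, w0}"
  have c0: "card ?Z0 = 2" using vw by simp
  have "?Z0 \<subseteq> {v. forced E ?Z0 v}" by (auto intro: forced.init)
  then have "card ?Z0 \<le> card {v. forced E ?Z0 v}" by (intro card_mono) simp_all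
  then have i3: "2 * card ?Z0 \<le> card {v. forced E ?Z0 v} + 2" using c0 by simp
  have i2: "\<forall>z\<in>?Z0. \<exists>w. E z w \<and> forced E ?Z0 w"
    using w0 sym forced.init[of v0 ?Z0 E] forced.init[of w0 ?Z0 E] by auto
  obtain Z' where Z': "zero_forcing_set E Z'" "2 * card Z' \<le> CARD('n) + 2"
    using grow[OF assms, of ?Z0] i2 i3 by auto
  have "zero_forcing_number E \<le> card Z'"
    unfolding zero_forcing_number_def using Z'(1) finF by (intro Min_le) auto
  then have "real (zero_forcing_number E) \<le> real CARD('n) / 2 + 1" using Z'(2) by linarith
  with part1 show ?thesis by simp
qed

end
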